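(* Let $n\ge 2$ be an integer and let $A$ be an uncountable compact subset of $(L_n,\tau_E|_{L_n})$. Then $(X_n,\tau(A))$ is perfect but not Lindelöf, and likewise $(X_n,\tau(L_n\setminus A))$ is perfect but not Lindelöf.
   Context: For $\overline{x},\overline{a}\in\mathbb R^n$ let $|\overline{x}-\overline{a}|$ be the Euclidean distance and $B(\overline{a},\epsilon)=\{\overline{x}\in\mathbb R^n:|\overline{x}-\overline{a}|<\epsilon\}$. Let $P_n=\{\overline{x}\in\mathbb R^n: x_n>0\}$, $L_n=\{\overline{x}\in\mathbb R^n: x_n=0\}$, $X_n=P_n\cup L_n$, and let $\tau_E$ denote the Euclidean topology on $X_n$. For $\overline{a}\in L_n$ and $\epsilon>0$ put $\overline{a(\epsilon)}=(a_1,\dots,a_{n-1},\epsilon)$ and $\tilde B(\overline{a},\epsilon)=\{\overline{a}\}\cup B(\overline{a(\epsilon)},\epsilon)$. For $A\subseteq L_n$, the topology $\tau(A)$ on $X_n$ is generated by the local bases: at $\overline{a}\in P_n$, the sets $B(\overline{a},\epsilon)$ with $0<\epsilon<a_n$; at $\overline{a}\in A$, the sets $B(\overline{a},\epsilon)\cap X_n$ with $\epsilon>0$; at $\overline{a}\in L_n\setminus A$, the sets $\tilde B(\overline{a},\epsilon)$ with $\epsilon>0$. A space is perfect if every closed set is a $G_\delta$-set. *)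

theory Defs
  imports "HOL-Analysis.Analysis"
begin

text \<open>Points of R^n (n = CARD('m) + 1) are represented as pairs (a, t) with
  a in R^(n-1) and t the last coordinate; the product metric is Euclidean.\<close>

definition Xn :: "((real^'m) \<times> real) set" where
  "Xn = {p. snd p \<ge> 0}"

definition Pn :: "((real^'m) \<times> real) set" where
  "Pn = {p. snd p > 0}"

definition Ln :: "((real^'m) \<times> real) set" where
  "Ln = {p. snd p = 0}"

definition local_base :: "((real^'m) \<times> real) set \<Rightarrow> ((real^'m) \<times> real) \<Rightarrow> ((real^'m) \<times> real) set set" where
  "local_base A p =
     (if p \<in> Pn then {ball p e | e. 0 < e \<and> e < snd p}
      else if p \<in> A then {ball p e \<inter> Xn | e. 0 < e}
      else {insert p (ball (fst p, e) e) | e. 0 < e})"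

definition tau :: "((real^'m) \<times> real) set \<Rightarrow> ((real^'m) \<times> real) topology" where
  "tau A = topology (\<lambda>U. U \<subseteq> Xn \<and> (\<forall>p\<in>U. \<exists>B\<in>local_base A p. B \<subseteq> U))"

definition perfect_top :: "'a topology \<Rightarrow> bool" where
  "perfect_top X \<longleftrightarrow> (\<forall>C. closedin X C \<longrightarrow> gdelta_in X C)"

end

theory Submission
  imports Defs
begin



definition OP :: "((real^'m) \<times> real) set \<Rightarrow> ((real^'m) \<times> real) set \<Rightarrow> bool" where
  "OP B U \<longleftrightarrow> U \<subseteq> Xn \<and> (\<forall>p\<in>U. \<exists>W\<in>local_base B p. W \<subseteq> U)"

lemma snd_pos_ball:
  fixes x :: "((real^'m) \<times> real)"
  assumes "dist x (a, e) < e" shows "snd x > 0"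
proof -
  have "dist (snd x) (snd (a,e)) \<le> dist x (a,e)" by (rule dist_snd_le)
  then show ?thesis using assms by (simp add: dist_real_def)
qed

lemma ball_Pn:
  fixes p :: "((real^'m) \<times> real)"
  assumes "x \<in> ball p e" "e \<le> snd p" shows "snd x > 0"
proof -
  have "dist (snd p) (snd x) \<le> dist p x" by (rule dist_snd_le)
  then show ?thesis using assms by (simp add: dist_real_def)
qed

lemma tball_Pn: "ball (a, e) e \<subseteq> Pn"
proof
  fix x assume "x \<in> ball (a,e) e"
  then have "dist x (a,e) < e" by (simp add: dist_commute)
  then have "snd x > 0" by (rule snd_pos_ball)
  then show "x \<in> Pn" by (simp add: Pn_def)
qed

lemma Pn_Xn: "Pn \<subseteq> Xn" by (auto simp: Pn_def Xn_def)

lemma ball_sub_Pn: "e \<le> snd p \<Longrightarrow> ball p e \<subseteq> Pn"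
proof
  fix x assume "x \<in> ball p e" "e \<le> snd p"
  then have "snd x > 0" by (rule ball_Pn)
  then show "x \<in> Pn" by (simp add: Pn_def)
qed

lemma Pn_Ln: "Pn \<inter> Ln = {}" by (auto simp: Pn_def Ln_def)

lemma tball_mono:
  fixes a :: "real^'m"
  assumes "e \<le> e'" shows "ball (a, e) e \<subseteq> ball (a, e') e'"
proof
  fix x assume "x \<in> ball (a, e) e"
  then have "dist (a,e) x < e" by simp
  moreover have "dist (a,e') x \<le> dist (a,e') (a,e) + dist (a,e) x" by (rule dist_triangle)
  moreover have "dist (a,e') (a,e) = e' - e" using assms by (simp add: dist_Pair_Pair dist_real_def)
  ultimately show "x \<in> ball (a, e') e'" by simp
qed

lemma lb_Pn: "p \<in> Pn \<Longrightarrow> W \<in> local_base B p \<longleftrightarrow> (\<exists>e. W = ball p e \<and> 0 < e \<and> e < snd p)"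
  unfolding local_base_def by auto

lemma lb_B: "p \<notin> Pn \<Longrightarrow> p \<in> B \<Longrightarrow> W \<in> local_base B p \<longleftrightarrow> (\<exists>e. W = ball p e \<inter> Xn \<and> 0 < e)"
  unfolding local_base_def by auto

lemma lb_L: "p \<notin> Pn \<Longrightarrow> p \<notin> B \<Longrightarrow> W \<in> local_base B p \<longleftrightarrow> (\<exists>e. W = insert p (ball (fst p, e) e) \<and> 0 < e)"
  unfolding local_base_def by auto

lemma lb_directed:
  assumes "W1 \<in> local_base B p" "W2 \<in> local_base B p"
  shows "\<exists>W\<in>local_base B p. W \<subseteq> W1 \<inter> W2"
proof (cases "p \<in> Pn")
  case True
  then obtain e1 e2 where "W1 = ball p e1" "0 < e1" "e1 < snd p" "W2 = ball p e2" "0 < e2" "e2 < snd p"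
    using assms lb_Pn by metis
  then have "ball p (min e1 e2) \<in> local_base B p" "ball p (min e1 e2) \<subseteq> W1 \<inter> W2"
    using True by (auto simp: lb_Pn)
  then show ?thesis by blast
next
  case F: False
  show ?thesis
  proof (cases "p \<in> B")
    case True
    then obtain e1 e2 where "W1 = ball p e1 \<inter> Xn" "0 < e1" "W2 = ball p e2 \<inter> Xn" "0 < e2"
      using assms F lb_B by metis
    then have "ball p (min e1 e2) \<inter> Xn \<in> local_base B p" "ball p (min e1 e2) \<inter> Xn \<subseteq> W1 \<inter> W2"
      using True F by (auto simp: lb_B)
    then show ?thesis by blast
  next
    case False
    then obtain e1 e2 where W: "W1 = insert p (ball (fst p, e1) e1)" "0 < e1"
       "W2 = insert p (ball (fst p, e2) e2)" "0 < e2"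
      using assms F lb_L by metis
    have "ball (fst p, min e1 e2) (min e1 e2) \<subseteq> ball (fst p, e1) e1"
      by (rule tball_mono) simp
    moreover have "ball (fst p, min e1 e2) (min e1 e2) \<subseteq> ball (fst p, e2) e2"
      by (rule tball_mono) simp
    ultimately have "insert p (ball (fst p, min e1 e2) (min e1 e2)) \<subseteq> W1 \<inter> W2" using W by blast
    moreover have "insert p (ball (fst p, min e1 e2) (min e1 e2)) \<in> local_base B p"
      using False F W by (auto simp: lb_L)
    ultimately show ?thesis by blast
  qed
qed

lemma istop: "istopology (OP B)"
  unfolding istopology_def
proof (intro conjI allI impI)
  fix S T assume S: "OP B S" and T: "OP B T"
  show "OP B (S \<inter> T)" unfolding OP_def
  proof (intro conjI ballI)
    show "S \<inter> T \<subseteq> Xn" using S by (auto simp: OP_def)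
    fix p assume p: "p \<in> S \<inter> T"
    obtain W1 where W1: "W1 \<in> local_base B p" "W1 \<subseteq> S" using S p unfolding OP_def by blast
    obtain W2 where W2: "W2 \<in> local_base B p" "W2 \<subseteq> T" using T p unfolding OP_def by blast
    obtain W where "W \<in> local_base B p" "W \<subseteq> W1 \<inter> W2" using lb_directed[OF W1(1) W2(1)] by blast
    then show "\<exists>W\<in>local_base B p. W \<subseteq> S \<inter> T" using W1 W2 by blast
  qed
next
  fix K assume K: "\<forall>S\<in>K. OP B S"
  show "OP B (\<Union>K)" unfolding OP_def
  proof (intro conjI ballI)
    show "\<Union>K \<subseteq> Xn" using K by (auto simp: OP_def)
    fix p assume "p \<in> \<Union>K"
    then obtain S where S: "S \<in> K" "p \<in> S" by blast
    then obtain W where "W \<in> local_base B p" "W \<subseteq> S" using K unfolding OP_def by blast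
    then show "\<exists>W\<in>local_base B p. W \<subseteq> \<Union>K" using S by blast
  qed
qed

lemma tau_OP: "tau B = topology (OP B)"
  unfolding tau_def OP_def[abs_def] by (rule refl)

lemma openin_tau: "openin (tau B) U \<longleftrightarrow> OP B U"
  unfolding tau_OP by (simp add: topology_inverse'[OF istop])

lemma OP_Xn:
  fixes B :: "((real^'m) \<times> real) set"
  shows "OP B Xn"
  unfolding OP_def
proof (intro conjI ballI)
  fix p :: "((real^'m) \<times> real)" assume p: "p \<in> Xn"
  show "\<exists>W\<in>local_base B p. W \<subseteq> Xn"
  proof (cases "p \<in> Pn")
    case True
    then have "ball p (snd p / 2) \<in> local_base B p" by (auto simp: lb_Pn Pn_def)
    moreover have "ball p (snd p / 2) \<subseteq> Xn" using True by (intro order_trans[OF ball_sub_Pn Pn_Xn]) (simp add: Pn_def)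
    ultimately show ?thesis by blast
  next
    case F: False
    show ?thesis
    proof (cases "p \<in> B")
      case True
      then have "ball p 1 \<inter> Xn \<in> local_base B p" using F by (auto simp: lb_B)
      then show ?thesis by blast
    next
      case False
      then have "insert p (ball (fst p, 1) 1) \<in> local_base B p" using F by (auto simp: lb_L)
      moreover have "insert p (ball (fst p, 1) 1) \<subseteq> Xn" using p tball_Pn Pn_Xn by blast
      ultimately show ?thesis by blast
    qed
  qed
qed simp

lemma topspace_tau: "topspace (tau B) = Xn"
  using OP_Xn[of B] unfolding topspace_def openin_tau by (auto simp: OP_def)

lemma Xn_notPn: "p \<in> Xn \<Longrightarrow> p \<notin> Pn \<Longrightarrow> snd p = 0"
  by (auto simp: Xn_def Pn_def)

lemma Ln_sub: "Ln \<subseteq> Xn" by (auto simp: Ln_def Xn_def)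

lemma open_tau:
  fixes B V :: "((real^'m) \<times> real) set"
  assumes V: "open V" shows "openin (tau B) (V \<inter> Xn)"
  unfolding openin_tau OP_def
proof (intro conjI ballI)
  fix p :: "((real^'m) \<times> real)" assume p: "p \<in> V \<inter> Xn"
  then obtain e where e: "e > 0" "ball p e \<subseteq> V" using V open_contains_ball by blast
  show "\<exists>W\<in>local_base B p. W \<subseteq> V \<inter> Xn"
  proof (cases "p \<in> Pn")
    case True
    define d where "d = min e (snd p / 2)"
    have d: "d > 0" "d < snd p" using True e by (auto simp: d_def Pn_def)
    then have "ball p d \<in> local_base B p" using True by (auto simp: lb_Pn)
    moreover have "ball p d \<subseteq> Xn" using d by (intro order_trans[OF ball_sub_Pn Pn_Xn]) simp
    moreover have "ball p d \<subseteq> V" using e d_def by auto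
    ultimately show ?thesis by blast
  next
    case F: False
    show ?thesis
    proof (cases "p \<in> B")
      case True
      then have "ball p e \<inter> Xn \<in> local_base B p" using F e by (auto simp: lb_B)
      then show ?thesis using e by blast
    next
      case False
      have sp: "snd p = 0" using p F Xn_notPn by blast
      define a where "a = fst p"
      have pp: "p = (a, 0)" using sp unfolding a_def by (simp add: prod_eq_iff)
      have L: "insert p (ball (fst p, e/2) (e/2)) \<in> local_base B p" using F False e by (auto simp: lb_L)
      have X: "ball (fst p, e/2) (e/2) \<subseteq> Xn" using tball_Pn Pn_Xn by blast
      have d2: "dist p (fst p, e/2) = e/2"
      proof -
        have "dist (a, 0) (a, e/2) = e/2" using e by (simp add: dist_Pair_Pair dist_real_def)
        then show ?thesis using pp by simp
      qed
      have Y: "ball (fst p, e/2) (e/2) \<subseteq> ball p e"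
      proof
        fix x assume x: "x \<in> ball (fst p, e/2) (e/2)"
        have "dist p x \<le> dist p (fst p, e/2) + dist (fst p, e/2) x" by (rule dist_triangle)
        then show "x \<in> ball p e" using x d2 by simp
      qed
      have "insert p (ball (fst p, e/2) (e/2)) \<subseteq> V \<inter> Xn" using X Y e(2) p by blast
      then show ?thesis using L by blast
    qed
  qed
qed simp

lemma closed_tau:
  assumes "closed C" shows "closedin (tau B) (C \<inter> Xn)"
proof -
  have "Xn - C \<inter> Xn = (- C) \<inter> Xn" by auto
  then show ?thesis unfolding closedin_def topspace_tau
    using open_tau[of "- C" B] assms by auto
qed

lemma closed_sub:
  fixes B F S :: "((real^'m) \<times> real) set"
  assumes F: "closed F" "F \<subseteq> Ln - B" and S: "S \<subseteq> F"
  shows "closedin (tau B) S"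
  unfolding closedin_def topspace_tau openin_tau OP_def
proof (intro conjI ballI)
  show "S \<subseteq> Xn" using assms Ln_sub by blast
  show "Xn - S \<subseteq> Xn" by blast
  fix p :: "((real^'m) \<times> real)" assume p: "p \<in> Xn - S"
  show "\<exists>W\<in>local_base B p. W \<subseteq> Xn - S"
  proof (cases "p \<in> Pn")
    case True
    then have "ball p (snd p / 2) \<in> local_base B p" by (auto simp: lb_Pn Pn_def)
    moreover have sub: "ball p (snd p / 2) \<subseteq> Pn" using True by (intro ball_sub_Pn) (simp add: Pn_def)
    moreover have "ball p (snd p / 2) \<subseteq> Xn - S" using sub Pn_Xn Pn_Ln S F by blast
    ultimately show ?thesis by blast
  next
    case NP: False
    show ?thesis
    proof (cases "p \<in> B")
      case True
      then have "p \<in> - F" using F by blast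
      moreover have "open (- F)" using F by auto
      ultimately obtain e where e: "e > 0" "ball p e \<subseteq> - F" using open_contains_ball by blast
      then have "ball p e \<inter> Xn \<in> local_base B p" using True NP by (auto simp: lb_B)
      moreover have "ball p e \<inter> Xn \<subseteq> Xn - S" using e S by blast
      ultimately show ?thesis by blast
    next
      case False
      then have "insert p (ball (fst p, 1) 1) \<in> local_base B p" using NP by (auto simp: lb_L)
      moreover have "insert p (ball (fst p, 1) 1) \<subseteq> Xn - S" using p tball_Pn Pn_Ln Pn_Xn S F by blast
      ultimately show ?thesis by blast
    qed
  qed
qed

lemma open_fsigma:
  fixes B V :: "((real^'m) \<times> real) set"
  assumes "open V" shows "fsigma_in (tau B) (V \<inter> Xn)"
proof -
  have "fsigma_in euclidean V" using assms
    by (simp add: open_imp_fsigma_in metrizable_space_euclidean)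
  then obtain C :: "nat \<Rightarrow> ((real^'m) \<times> real) set" where C: "\<And>n. closedin euclidean (C n)" "\<Union>(range C) = V"
    unfolding fsigma_in_ascending by blast
  have "V \<inter> Xn = \<Union>((\<lambda>n. C n \<inter> Xn) ` UNIV)" using C by auto
  moreover have "fsigma_in (tau B) (\<Union>((\<lambda>n. C n \<inter> Xn) ` UNIV))"
  proof (rule fsigma_in_Union)
    fix S assume "S \<in> range (\<lambda>n. C n \<inter> Xn)"
    then obtain n where n: "S = C n \<inter> Xn" by blast
    have "closed (C n)" using C(1) closed_closedin by blast
    then have "closedin (tau B) (C n \<inter> Xn)" by (rule closed_tau)
    then show "fsigma_in (tau B) S" using n closed_imp_fsigma_in by blast
  qed simp
  ultimately show ?thesis by simp
qed

lemma perfect_gen: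
  fixes B :: "((real^'m) \<times> real) set" and F :: "nat \<Rightarrow> ((real^'m) \<times> real) set"
  assumes F: "\<And>k. closed (F k)" "\<And>k. F k \<subseteq> Ln - B" and cov: "Ln - B \<subseteq> (\<Union>k. F k)"
  shows "perfect_top (tau B)"
  unfolding perfect_top_def
proof (intro allI impI)
  fix C assume C: "closedin (tau B) C"
  define U where "U = Xn - C"
  have U: "OP B U" using C unfolding U_def closedin_def topspace_tau openin_tau by blast
  define V where "V = (\<Union>pe\<in>{pe. snd pe > 0 \<and> ball (fst pe) (snd pe) \<inter> Xn \<subseteq> U}. ball (fst pe) (snd pe))"
  have oV: "open V" unfolding V_def by (intro open_UN) simp
  have VU: "V \<inter> Xn \<subseteq> U" unfolding V_def by auto
  have inV: "p \<in> V" if "e > 0" "ball p e \<inter> Xn \<subseteq> U" for p e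
    unfolding V_def using that by (intro UN_I[of "(p,e)"]) auto
  have cov2: "U \<subseteq> (V \<inter> Xn) \<union> (\<Union>k. U \<inter> F k)"
  proof
    fix p :: "((real^'m) \<times> real)" assume pU: "p \<in> U"
    then have pX: "p \<in> Xn" using U by (auto simp: OP_def)
    obtain W where W: "W \<in> local_base B p" "W \<subseteq> U" using U pU by (auto simp: OP_def)
    show "p \<in> (V \<inter> Xn) \<union> (\<Union>k. U \<inter> F k)"
    proof (cases "p \<in> Pn")
      case True
      then obtain e where "W = ball p e" "0 < e" "e < snd p" using W lb_Pn by metis
      moreover have "ball p e \<subseteq> Xn" using \<open>e < snd p\<close> by (intro order_trans[OF ball_sub_Pn Pn_Xn]) simp
      ultimately have "p \<in> V" using W inV[of e p] by blast
      then show ?thesis using pX by blast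
    next
      case NP: False
      show ?thesis
      proof (cases "p \<in> B")
        case True
        then obtain e where "W = ball p e \<inter> Xn" "0 < e" using W NP lb_B by metis
        then have "p \<in> V" using W inV[of e p] by blast
        then show ?thesis using pX by blast
      next
        case False
        then have "p \<in> Ln - B" using pX NP Xn_notPn[of p] by (simp add: Ln_def)
        then show ?thesis using cov pU by blast
      qed
    qed
  qed
  have "U = (V \<inter> Xn) \<union> (\<Union>k. U \<inter> F k)" using cov2 VU by blast
  moreover have "fsigma_in (tau B) ((V \<inter> Xn) \<union> (\<Union>k. U \<inter> F k))"
  proof (rule fsigma_in_Un)
    show "fsigma_in (tau B) (V \<inter> Xn)" using oV open_fsigma by blast
    show "fsigma_in (tau B) (\<Union>k. U \<inter> F k)"
    proof (rule fsigma_in_Union)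
      fix S assume "S \<in> range (\<lambda>k. U \<inter> F k)"
      then obtain k where k: "S = U \<inter> F k" by blast
      have "closedin (tau B) (U \<inter> F k)" using F(1,2) by (rule closed_sub) blast
      then show "fsigma_in (tau B) S" using k closed_imp_fsigma_in by blast
    qed simp
  qed
  ultimately have "fsigma_in (tau B) U" by simp
  moreover have "C \<subseteq> Xn" using closedin_subset[OF C] unfolding topspace_tau .
  ultimately show "gdelta_in (tau B) C"
    unfolding gdelta_in_fsigma_in topspace_tau U_def by simp
qed

lemma notLind:
  fixes B D :: "((real^'m) \<times> real) set"
  assumes D: "closed D" "D \<subseteq> Ln - B" "uncountable D"
  shows "\<not> Lindelof_space (tau B)"
proof
  assume L: "Lindelof_space (tau B)"
  define f :: "((real^'m) \<times> real) \<Rightarrow> ((real^'m) \<times> real) set" where "f = (\<lambda>q. insert q Pn)"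
  define \<U> where "\<U> = insert (Xn - D) (f ` D)"
  have cD: "closedin (tau B) D" using closed_sub[OF D(1,2)] by simp
  have o1: "openin (tau B) (Xn - D)" using cD unfolding closedin_def topspace_tau by blast
  have o2: "openin (tau B) (f q)" if q: "q \<in> D" for q
    unfolding openin_tau OP_def f_def
  proof (intro conjI ballI)
    have qL: "q \<in> Ln" "q \<notin> B" "q \<notin> Pn" using q D(2) Pn_Ln by blast+
    then show "insert q Pn \<subseteq> Xn" using Ln_sub by (auto simp: Pn_def Xn_def)
    fix p :: "((real^'m) \<times> real)" assume p: "p \<in> insert q Pn"
    show "\<exists>W\<in>local_base B p. W \<subseteq> insert q Pn"
    proof (cases "p \<in> Pn")
      case True
      then have "ball p (snd p / 2) \<in> local_base B p" by (auto simp: lb_Pn Pn_def)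
      moreover have "ball p (snd p / 2) \<subseteq> Pn" using True by (intro ball_sub_Pn) (simp add: Pn_def)
      ultimately show ?thesis by blast
    next
      case False
      then have "p = q" using p by blast
      then have "insert p (ball (fst p, 1) 1) \<in> local_base B p" using qL by (auto simp: lb_L)
      moreover have "insert p (ball (fst p, 1) 1) \<subseteq> insert q Pn" using \<open>p = q\<close> tball_Pn by blast
      ultimately show ?thesis by blast
    qed
  qed
  have DX: "D \<subseteq> Xn" using D Ln_sub by blast
  have PX: "Pn \<subseteq> Xn" by (auto simp: Pn_def Xn_def)
  have "\<Union>\<U> = Xn" unfolding \<U>_def f_def using DX PX by auto
  moreover have "\<forall>U\<in>\<U>. openin (tau B) U" using o1 o2 unfolding \<U>_def by blast
  moreover have "(\<forall>U\<in>\<U>. openin (tau B) U) \<and> \<Union>\<U> = topspace (tau B) \<longrightarrow>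
     (\<exists>\<V>. countable \<V> \<and> \<V> \<subseteq> \<U> \<and> \<Union>\<V> = topspace (tau B))"
    by (rule spec[OF L[unfolded Lindelof_space_def]])
  ultimately obtain \<V> where V: "countable \<V>" "\<V> \<subseteq> \<U>" "\<Union>\<V> = Xn"
    unfolding topspace_tau by blast
  have "f ` D \<subseteq> \<V>"
  proof
    fix W assume "W \<in> f ` D"
    then obtain q where q: "q \<in> D" "W = f q" by blast
    then obtain W' where W': "W' \<in> \<V>" "q \<in> W'" using V DX by blast
    then have "W' \<in> \<U>" using V by blast
    then consider "W' = Xn - D" | q' where "q' \<in> D" "W' = f q'" unfolding \<U>_def by blast
    then show "W \<in> \<V>"
    proof cases
      case 1 then show ?thesis using W' q by blast
    next
      case 2
      have "q \<notin> Pn" using q(1) D(2) Pn_Ln by blast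
      have "q \<in> insert q' Pn" using W'(2) 2(2) unfolding f_def by simp
      then have "q = q'" using \<open>q \<notin> Pn\<close> by simp
      then have "W = W'" using q(2) 2(2) by simp
      then show ?thesis using W'(1) by simp
    qed
  qed
  then have "countable (f ` D)" using V countable_subset by blast
  moreover have "inj_on f D"
  proof
    fix x y assume xy: "x \<in> D" "y \<in> D" "f x = f y"
    have "x \<notin> Pn" using xy(1) D Pn_Ln by blast
    have "x \<in> f x" by (simp add: f_def)
    then have "x \<in> f y" using xy(3) by simp
    then have "x \<in> insert y Pn" unfolding f_def by simp
    then show "x = y" using \<open>x \<notin> Pn\<close> by simp
  qed
  ultimately have "countable D" using countable_image_inj_on by blast
  then show False using D by blast
qed

lemma closed_Ln: "closed (Ln :: ((real^'m) \<times> real) set)"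
proof -
  have "(Ln :: ((real^'m) \<times> real) set) = snd -` {0}" by (auto simp: Ln_def)
  moreover have "closed (snd -` {0::real} :: ((real^'m) \<times> real) set)"
    by (intro closed_vimage continuous_intros)
  ultimately show ?thesis by simp
qed

lemma closed_Fk: "closed (Ln \<inter> (\<Inter>a\<in>A. - ball a r))"
  using closed_Ln by (intro closed_Int closed_INT) auto

theorem mainTheorem17:
  fixes A :: "((real^'m) \<times> real) set"
  assumes "A \<subseteq> Ln" and "compact A" and "uncountable A"
  shows "perfect_top (tau A) \<and> \<not> Lindelof_space (tau A)
       \<and> perfect_top (tau (Ln - A)) \<and> \<not> Lindelof_space (tau (Ln - A))"
proof (intro conjI)
  have cA: "closed A" using assms(2) by (rule compact_imp_closed)
  define F :: "nat \<Rightarrow> ((real^'m) \<times> real) set" where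
    "F k = Ln \<inter> (\<Inter>a\<in>A. - ball a (1 / real (Suc k)))" for k
  show "perfect_top (tau A)"
  proof (rule perfect_gen[of F])
    show "closed (F k)" for k unfolding F_def by (rule closed_Fk)
    show "F k \<subseteq> Ln - A" for k
    proof
      fix q assume q: "q \<in> F k"
      have "q \<notin> A"
      proof
        assume "q \<in> A"
        then have "q \<notin> ball q (1 / real (Suc k))" using q unfolding F_def by blast
        then show False by simp
      qed
      then show "q \<in> Ln - A" using q unfolding F_def by blast
    qed
    show "Ln - A \<subseteq> (\<Union>k. F k)"
    proof
      fix q assume q: "q \<in> Ln - A"
      have "open (- A)" using cA by auto
      moreover have "q \<in> - A" using q by blast
      ultimately obtain e where e: "e > 0" "ball q e \<subseteq> - A" using open_contains_ball by blast
      obtain k where k: "inverse (real (Suc k)) < e" using reals_Archimedean[OF e(1)] by blast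
      have "q \<in> F k" unfolding F_def
      proof (intro IntI INT_I)
        show "q \<in> Ln" using q by blast
        fix a assume a: "a \<in> A"
        then have "a \<notin> ball q e" using e by blast
        then have "dist q a \<ge> e" by simp
        then have "dist a q \<ge> 1 / real (Suc k)" using k by (simp add: dist_commute inverse_eq_divide)
        then show "q \<in> - ball a (1 / real (Suc k))" by simp
      qed
      then show "q \<in> (\<Union>k. F k)" by blast
    qed
  qed
  show "\<not> Lindelof_space (tau A)"
  proof -
    define D where "D = Ln \<inter> (\<Inter>a\<in>A. - ball a 1)"
    have cD: "closed D" unfolding D_def by (rule closed_Fk)
    have DL: "D \<subseteq> Ln - A"
    proof
      fix q assume q: "q \<in> D"
      have "q \<notin> A"
      proof
        assume "q \<in> A"
        then have "q \<notin> ball q 1" using q unfolding D_def by blast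
        then show False by simp
      qed
      then show "q \<in> Ln - A" using q unfolding D_def by blast
    qed
    obtain R where R: "\<And>x. x \<in> A \<Longrightarrow> norm x \<le> R"
      using compact_imp_bounded[OF assms(2)] unfolding bounded_iff by blast
    obtain v :: "real^'m" where v: "norm v = 1" using vector_choose_size[of 1] by auto
    define g :: "real \<Rightarrow> ((real^'m) \<times> real)" where "g t = (t *\<^sub>R v, 0)" for t
    have ng: "norm (g t) = \<bar>t\<bar>" for t unfolding g_def using v by (simp add: norm_Pair)
    have gD: "g ` {R+1..R+2} \<subseteq> D"
    proof
      fix y assume "y \<in> g ` {R+1..R+2}"
      then obtain t where t: "t \<in> {R+1..R+2}" "y = g t" by blast
      show "y \<in> D" unfolding D_def
      proof (intro IntI INT_I)
        show "y \<in> Ln" using t by (simp add: g_def Ln_def)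
        fix a assume a: "a \<in> A"
        have "dist 0 y \<le> dist 0 a + dist a y" by (rule dist_triangle)
        then have "norm y \<le> norm a + dist a y" by (simp add: dist_0_norm)
        moreover have "norm y \<ge> t" using ng t by simp
        moreover have "norm a \<le> R" using R a by blast
        ultimately have "dist a y \<ge> 1" using t by simp
        then show "y \<in> - ball a 1" by simp
      qed
    qed
    have "inj_on g {R+1..R+2}"
    proof
      fix s t assume "g s = g t"
      then have "s *\<^sub>R v = t *\<^sub>R v" by (simp add: g_def)
      then show "s = t" using v by (metis norm_zero scaleR_cancel_right zero_neq_one)
    qed
    moreover have "uncountable {R+1..R+2}" by (simp add: uncountable_closed_interval)
    ultimately have "uncountable (g ` {R+1..R+2})" using countable_image_inj_on by blast
    then have "uncountable D" using gD countable_subset by blast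
    then show ?thesis using notLind[OF cD DL] by blast
  qed
  show "perfect_top (tau (Ln - A))"
  proof (rule perfect_gen[of "\<lambda>k. A"])
    show "closed A" by (rule cA)
    show "A \<subseteq> Ln - (Ln - A)" using assms(1) by blast
    show "Ln - (Ln - A) \<subseteq> (\<Union>k. A)" by blast
  qed
  show "\<not> Lindelof_space (tau (Ln - A))"
  proof (rule notLind)
    show "closed A" by (rule cA)
    show "A \<subseteq> Ln - (Ln - A)" using assms(1) by blast
    show "uncountable A" by (rule assms(3))
  qed
qed

end
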